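(* Let $q=2^m$ with $m\ge2$, $c\in\mathrm{GF}(q^2)^*\setminus U_{q+1}$, and $e$ an integer with $1\le e\le q$. Let $a_0+a_1u+\cdots+a_qu^q$ ($a_i\in\mathrm{GF}(q^2)$) be the polynomial expansion of the function $U_{q+1}\to\mathrm{GF}(q^2)$, $u\mapsto\left(\frac{u+c^q}{cu+1}\right)^e$. Then $a_0=0$ and $a_1=c^{q(e-1)}$.
   Context: $U_{q+1}$ denotes the set of $(q+1)$-th roots of unity in $\mathrm{GF}(q^2)$. The polynomial expansion of a function $f:U_{q+1}\to\mathrm{GF}(q^2)$ is the unique polynomial $\sum_{i=0}^{q}a_iu^i$ of degree at most $q$ with $f(u)=\sum_{i=0}^q a_iu^i$ for all $u\in U_{q+1}$. *)

theory Defs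
  imports "HOL-Computational_Algebra.Polynomial"
begin

definition unit_roots :: "nat \<Rightarrow> 'a::field set" where
  "unit_roots n = {u. u ^ n = 1}"

definition is_poly_expansion :: "nat \<Rightarrow> ('a::field \<Rightarrow> 'a) \<Rightarrow> 'a poly \<Rightarrow> bool" where
  "is_poly_expansion q f p \<longleftrightarrow> degree p \<le> q \<and> (\<forall>u \<in> unit_roots (q + 1). poly p u = f u)"

end

theory Submission
  imports Defs
begin


lemma fermat_ff:
  fixes x :: "'a::{field,finite}"
  assumes "x \<noteq> 0"
  shows "x ^ (card (UNIV :: 'a set) - 1) = 1"
proof -
  define A where "A = (UNIV :: 'a set) - {0}"
  have fin: "finite A" by (simp add: A_def)
  have bij: "bij_betw (\<lambda>y. x * y) A A"
    by (rule bij_betw_byWitness[where f'="\<lambda>y. y / x"]) (use assms in \<open>auto simp: A_def\<close>)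
  have "prod (\<lambda>y. x * y) A = prod id A"
    using prod.reindex_bij_betw[OF bij, of id] by simp
  moreover have "prod (\<lambda>y. x * y) A = x ^ card A * prod id A"
    by (simp add: prod.distrib)
  moreover have "prod id A \<noteq> 0" using fin by (simp add: A_def)
  ultimately have "x ^ card A = 1" by simp
  moreover have "card A = card (UNIV :: 'a set) - 1"
    by (simp add: A_def card_Diff_singleton)
  ultimately show ?thesis by simp
qed

lemma fermat_ff2:
  fixes x :: "'a::{field,finite}"
  shows "x ^ card (UNIV :: 'a set) = x"
proof (cases "x = 0")
  case True
  have "card (UNIV :: 'a set) > 0" by (simp add: finite_UNIV_card_ge_0)
  then show ?thesis using True by (simp add: zero_power)
next
  case False
  have "card (UNIV :: 'a set) > 0" by (simp add: finite_UNIV_card_ge_0)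
  then have "x ^ card (UNIV :: 'a set) = x * x ^ (card (UNIV :: 'a set) - 1)"
    by (metis Suc_diff_1 power_Suc)
  then show ?thesis using fermat_ff[OF False] by simp
qed

lemma char2:
  assumes "card (UNIV :: 'a::{field,finite} set) = 2 ^ k" "k > 0"
  shows "CHAR('a) = 2"
proof -
  have "odd (card (UNIV :: 'a set) - 1)" using assms by simp
  then have "(-1::'a) ^ (card (UNIV :: 'a set) - 1) = -1" by simp
  moreover have "(-1::'a) ^ (card (UNIV :: 'a set) - 1) = 1" by (rule fermat_ff) simp
  ultimately have "(-1::'a) = 1" by simp
  then have "(1::'a) + 1 = 0" by (metis add.right_inverse)
  then have "of_nat 2 = (0::'a)" by simp
  then have "CHAR('a) dvd 2" by (simp only: of_nat_eq_0_iff_char_dvd)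
  moreover have "CHAR('a) \<noteq> 1" by simp
  moreover have "CHAR('a) \<le> 2" using calculation(1) by (rule dvd_imp_le) simp
  moreover have "CHAR('a) \<noteq> 0" using calculation(1) by (intro notI) simp
  ultimately show ?thesis by linarith
qed

lemma frob2:
  fixes x y :: "'a::field"
  assumes "CHAR('a) = 2"
  shows "(x + y) ^ (2 ^ n) = x ^ (2 ^ n) + y ^ (2 ^ n)"
proof (induction n)
  case 0 then show ?case by simp
next
  case (Suc n)
  have two: "(2::'a) = 0" using of_nat_CHAR[where 'a='a] assms by simp
  have sq: "(a + b) ^ 2 = a ^ 2 + b ^ 2" for a b :: 'a
  proof -
    have "(a + b) ^ 2 = a ^ 2 + b ^ 2 + 2 * a * b" by (simp add: power2_eq_square algebra_simps)
    then show ?thesis using two by simp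
  qed
  have "(x + y) ^ (2 ^ Suc n) = ((x + y) ^ (2 ^ n)) ^ 2" by (simp add: power_mult[symmetric] mult.commute)
  also have "\<dots> = (x ^ (2 ^ n)) ^ 2 + (y ^ (2 ^ n)) ^ 2" using Suc sq by simp
  also have "\<dots> = x ^ (2 ^ Suc n) + y ^ (2 ^ Suc n)" by (simp add: power_mult[symmetric] mult.commute)
  finally show ?case .
qed

lemma dvd_window:
  fixes q n :: nat
  assumes "(q + 1) dvd n" "0 < n" "n < 2 * (q + 1)"
  shows "n = q + 1"
proof -
  obtain t where t: "n = (q + 1) * t" using assms(1) by auto
  have "t \<noteq> 0" using assms(2) t by auto
  moreover have "t < 2" using assms(3) t by (metis mult.commute mult_less_cancel2)
  ultimately have "t = 1" by auto
  then show ?thesis using t by simp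
qed



lemma card_roots_le:
  fixes z :: "'a::field"
  assumes "n > 0"
  shows "finite {x::'a. x ^ n = z} \<and> card {x::'a. x ^ n = z} \<le> n"
proof -
  define P where "P = (Polynomial.monom (1::'a) n + [:-z:])"
  have ev: "poly P x = x ^ n - z" for x by (simp add: P_def poly_monom)
  have deg: "degree P = n" using assms unfolding P_def
    by (subst degree_add_eq_left) (auto simp: degree_monom_eq)
  have nz: "P \<noteq> 0" using deg assms by auto
  have eq: "{x. x ^ n = z} = {x. poly P x = 0}" by (auto simp: ev)
  show ?thesis using card_poly_roots_bound[OF nz] poly_roots_finite[OF nz] deg eq by simp
qed

lemma card_U:
  fixes q :: nat
  assumes card: "card (UNIV :: 'a::{field,finite} set) = q ^ 2" and q2: "q \<ge> 2"
  shows "card (unit_roots (q + 1) :: 'a set) = q + 1"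
proof -
  let ?U = "unit_roots (q + 1) :: 'a set"
  have le: "card ?U \<le> q + 1" using card_roots_le[of "q+1" "1::'a"] by (simp add: unit_roots_def)
  define A where "A = (UNIV :: 'a set) - {0}"
  have cA: "card A = q ^ 2 - 1" by (simp add: A_def card_Diff_singleton card)
  have sub: "A \<subseteq> (\<Union>z\<in>?U. {y. y ^ (q - 1) = z})"
  proof
    fix y assume y: "y \<in> A"
    have "(y ^ (q - 1)) ^ (q + 1) = y ^ (q ^ 2 - 1)"
    proof -
      have "(q - 1) * (q + 1) = q ^ 2 - 1" using q2
        by (simp add: power2_eq_square algebra_simps diff_mult_distrib)
      then show ?thesis by (metis power_mult)
    qed
    also have "\<dots> = 1" using fermat_ff[of y] y card by (simp add: A_def)
    finally show "y \<in> (\<Union>z\<in>?U. {y. y ^ (q - 1) = z})" by (auto simp: unit_roots_def)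
  qed
  have finU: "finite ?U" by simp
  have "q ^ 2 - 1 \<le> card (\<Union>z\<in>?U. {y::'a. y ^ (q - 1) = z})"
    using card_mono[OF _ sub] cA by simp
  also have "\<dots> \<le> (\<Sum>z\<in>?U. card {y::'a. y ^ (q - 1) = z})" by (rule card_UN_le[OF finU])
  also have "\<dots> \<le> (\<Sum>z\<in>?U. (q - 1))"
    by (rule sum_mono) (use card_roots_le[of "q - 1"] q2 in auto)
  also have "\<dots> = card ?U * (q - 1)" by simp
  finally have H0: "q ^ 2 - 1 \<le> card ?U * (q - 1)" .
  have "q ^ 2 - 1 = (q + 1) * (q - 1)" using q2
    by (simp add: power2_eq_square algebra_simps diff_mult_distrib)
  with H0 have H: "(q + 1) * (q - 1) \<le> card ?U * (q - 1)" by simp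
  from H have "0 < q - 1 \<longrightarrow> q + 1 \<le> card ?U" by (simp only: mult_le_cancel2)
  then have "q + 1 \<le> card ?U" using q2 by simp
  with le show ?thesis by simp
qed

lemma power_sum_U:
  fixes q :: nat
  assumes card: "card (UNIV :: 'a::{field,finite} set) = q ^ 2" and q2: "q \<ge> 2"
    and ch: "CHAR('a) = 2" and ev: "even q"
  shows "(\<Sum>u\<in>(unit_roots (q + 1) :: 'a set). u ^ k) = (if (q + 1) dvd k then 1 else 0)"
proof -
  let ?U = "unit_roots (q + 1) :: 'a set"
  have cU: "card ?U = q + 1" by (rule card_U[OF card q2])
  show ?thesis
  proof (cases "(q + 1) dvd k")
    case True
    then obtain t where t: "k = (q + 1) * t" by auto
    have "\<And>u. u \<in> ?U \<Longrightarrow> u ^ k = 1"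
    proof -
      fix u :: 'a assume "u \<in> ?U"
      then have "u ^ (q + 1) = 1" by (simp add: unit_roots_def)
      moreover have "u ^ k = (u ^ (q + 1)) ^ t" by (simp only: t power_mult)
      ultimately show "u ^ k = 1" by simp
    qed
    then have "(\<Sum>u\<in>?U. u ^ k) = of_nat (q + 1)" using cU by simp
    also have "of_nat q = (0::'a)" using ev ch by (simp add: of_nat_eq_0_iff_char_dvd)
    then have "of_nat (q + 1) = (1::'a)" by simp
    finally show ?thesis using True by simp
  next
    case False
    define r where "r = k mod (q + 1)"
    have r0: "r > 0" using False by (simp add: r_def mod_eq_0_iff_dvd[symmetric] del: mod_eq_0_iff_dvd) 
    have r1: "r < q + 1" by (simp add: r_def)
    have "card {x::'a. x ^ r = 1} \<le> r" using card_roots_le[of r "1::'a"] r0 by blast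
    then have "\<not> ?U \<subseteq> {x::'a. x ^ r = 1}"
      using cU r1 card_mono[of "{x::'a. x ^ r = 1}" ?U] card_roots_le[OF r0, of 1] by auto
    then obtain w where w: "w \<in> ?U" "w ^ r \<noteq> 1" by auto
    have wk: "w ^ k = w ^ r"
    proof -
      have "k = (q + 1) * (k div (q + 1)) + r" by (metis r_def div_mult_mod_eq mult.commute)
      then have "w ^ k = (w ^ (q + 1)) ^ (k div (q + 1)) * w ^ r"
        by (metis power_add power_mult)
      then show ?thesis using w(1) by (simp add: unit_roots_def)
    qed
    have w0: "w \<noteq> 0" using w(1) by (auto simp: unit_roots_def)
    have wq: "w ^ (q + 1) = 1" using w(1) by (simp only: unit_roots_def mem_Collect_eq)
    have m1: "w * u \<in> ?U" if "u \<in> ?U" for u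
    proof -
      have "u ^ (q + 1) = 1" using that by (simp only: unit_roots_def mem_Collect_eq)
      then have "(w * u) ^ (q + 1) = 1" using wq by (simp only: power_mult_distrib mult_1)
      then show ?thesis unfolding unit_roots_def by simp
    qed
    have m2: "u / w \<in> ?U" if "u \<in> ?U" for u
    proof -
      have "u ^ (q + 1) = 1" using that by (simp only: unit_roots_def mem_Collect_eq)
      then have "(u / w) ^ (q + 1) = 1" using wq by (simp only: power_divide div_by_1)
      then show ?thesis unfolding unit_roots_def by simp
    qed
    have bij: "bij_betw (\<lambda>u. w * u) ?U ?U"
      by (rule bij_betw_byWitness[where f'="\<lambda>u. u / w"]) (use w0 m1 m2 in auto)
    have "(\<Sum>u\<in>?U. u ^ k) = (\<Sum>u\<in>?U. (w * u) ^ k)"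
      using sum.reindex_bij_betw[OF bij, of "\<lambda>u. u ^ k"] by simp
    also have "\<dots> = w ^ k * (\<Sum>u\<in>?U. u ^ k)" by (simp add: power_mult_distrib sum_distrib_left)
    finally have "(1 - w ^ k) * (\<Sum>u\<in>?U. u ^ k) = 0" by (simp add: algebra_simps)
    then have "(\<Sum>u\<in>?U. u ^ k) = 0" using w(2) wk by simp
    then show ?thesis using False by simp
  qed
qed



lemma poly_sum_q:
  fixes p :: "'a::comm_ring_1 poly"
  assumes "degree p \<le> q"
  shows "poly p x = (\<Sum>j\<le>q. coeff p j * x ^ j)"
proof -
  have "poly p x = (\<Sum>j\<le>degree p. coeff p j * x ^ j)" by (rule poly_altdef)
  also have "\<dots> = (\<Sum>j\<le>q. coeff p j * x ^ j)"
    by (rule sum.mono_neutral_left) (use assms in \<open>auto simp: coeff_eq_0\<close>)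
  finally show ?thesis .
qed

lemma coeff_extract:
  fixes q :: nat and p :: "'a::{field,finite} poly"
  assumes card: "card (UNIV :: 'a set) = q ^ 2" and q2: "q \<ge> 2"
    and ch: "CHAR('a) = 2" and ev: "even q" and dg: "degree p \<le> q" and i: "i \<le> q"
  shows "(\<Sum>u\<in>(unit_roots (q + 1) :: 'a set). poly p u * u ^ (q + 1 - i)) = coeff p i"
proof -
  let ?U = "unit_roots (q + 1) :: 'a set"
  have "(\<Sum>u\<in>?U. poly p u * u ^ (q + 1 - i)) =
        (\<Sum>u\<in>?U. \<Sum>j\<le>q. coeff p j * u ^ (j + (q + 1 - i)))"
    by (simp add: poly_sum_q[OF dg] sum_distrib_right power_add mult.assoc)
  also have "\<dots> = (\<Sum>j\<le>q. coeff p j * (\<Sum>u\<in>?U. u ^ (j + (q + 1 - i))))"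
    by (subst sum.swap) (simp add: sum_distrib_left)
  also have "\<dots> = (\<Sum>j\<le>q. coeff p j * (if j = i then 1 else 0))"
  proof (rule sum.cong[OF refl])
    fix j assume j: "j \<in> {..q}"
    have "(q + 1) dvd (j + (q + 1 - i)) \<longleftrightarrow> j = i"
    proof
      assume "(q + 1) dvd (j + (q + 1 - i))"
      moreover have "0 < j + (q + 1 - i)" "j + (q + 1 - i) < 2 * (q + 1)" using i j by auto
      ultimately have "j + (q + 1 - i) = q + 1" by (rule dvd_window)
      then show "j = i" using i by simp
    qed (use i in simp)
    then show "coeff p j * (\<Sum>u\<in>?U. u ^ (j + (q + 1 - i))) = coeff p j * (if j = i then 1 else 0)"
      by (simp only: power_sum_U[OF card q2 ch ev])
  qed
  also have "\<dots> = coeff p i" using i by (simp add: if_distrib cong: if_cong)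
  finally show ?thesis .
qed



theorem lemma10:
  fixes c :: "'a::{field,finite}" and m q e :: nat and p :: "'a poly"
  assumes "card (UNIV :: 'a set) = q ^ 2"
    and "q = 2 ^ m" and "m \<ge> 2"
    and "c \<noteq> 0" and "c \<notin> unit_roots (q + 1)"
    and "1 \<le> e" and "e \<le> q"
    and "is_poly_expansion q (\<lambda>u. ((u + c ^ q) / (c * u + 1)) ^ e) p"
  shows "coeff p 0 = 0 \<and> coeff p 1 = c ^ (q * (e - 1))"
proof -
  note card = assms(1)
  let ?U = "unit_roots (q + 1) :: 'a set"
  have q4: "q \<ge> 4" using assms(2,3) by (metis power_increasing[of 2 m "2::nat"] numeral_le_iff
      numeral_Bit0 power2_eq_square mult_2 one_le_numeral semiring_norm(69) numeral_le_one_iff)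
  have q2: "q \<ge> 2" using q4 by simp
  have ev: "even q" using assms(2,3) by simp
  have ch: "CHAR('a) = 2"
  proof (rule char2[of "2 * m"])
    show "card (UNIV :: 'a set) = 2 ^ (2 * m)" using card assms(2) by (simp add: power_mult[symmetric] mult.commute)
  qed (use assms(3) in simp)
  have two: "(1::'a) + 1 = 0" using of_nat_CHAR[where 'a='a] ch by simp
  have mp: "x - y = x + y" for x y :: 'a by (rule minus_CHAR_2[OF ch])
  have cq2: "c ^ (q * q) = c" using fermat_ff2[of c] card by (simp add: power2_eq_square)
  have frob: "(x + y) ^ q = x ^ q + y ^ q" for x y :: 'a using frob2[OF ch, of x y m] assms(2) by simp
  define d where "d = c ^ q"
  have dq: "d ^ q = c" using cq2 by (simp add: d_def power_mult[symmetric])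
  have dd: "d ^ (q + 1) = c * d" using dq by (simp add: mult.commute)
  have cqq: "c ^ (q + 1) = c * d" by (simp add: d_def)
  have "c ^ (q + 1) \<noteq> 1" using assms(5) by (simp only: unit_roots_def mem_Collect_eq) simp
  then have cd1: "c * d \<noteq> 1" using cqq by metis
  have cd1': "1 + c * d \<noteq> 0"
  proof
    assume "1 + c * d = 0"
    then have "c * d = - 1" by (metis add.commute add_eq_0_iff2)
    then have "c * d = 1" using uminus_CHAR_2[OF ch, of 1] by simp
    then show False using cd1 by simp
  qed
  have xx: "x + x = 0" for x :: 'a using two by (metis distrib_left mult_1_right mult_zero_right)
  have Uu: "u ^ (q + 1) = 1" if "u \<in> ?U" for u using that by (simp only: unit_roots_def mem_Collect_eq)
  have Uu': "u * u ^ q = 1" if "u \<in> ?U" for u using Uu[OF that] by simp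
  have u0: "u \<noteq> 0" if "u \<in> ?U" for u using Uu'[OF that] by auto
  have den: "c * u + 1 \<noteq> 0" if u: "u \<in> ?U" for u
  proof
    assume h: "c * u + 1 = 0"
    then have "c * u = - 1" by (simp add: add_eq_0_iff2)
    then have "c * u = 1" using uminus_CHAR_2[OF ch, of 1] by simp
    then have "(c * u) ^ (q + 1) = 1" by simp
    then have "c ^ (q + 1) = 1" using Uu[OF u] by (simp only: power_mult_distrib mult_1_right)
    then show False using cd1 cqq by simp
  qed
  have num: "u + d \<noteq> 0" if u: "u \<in> ?U" for u
  proof
    assume h: "u + d = 0"
    then have "u = - d" by (simp add: add_eq_0_iff2)
    then have "u = d" using uminus_CHAR_2[OF ch, of d] by simp
    then have "d ^ (q + 1) = 1" using Uu[OF u] by simp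
    then show False using cd1 dd by simp
  qed
  define phi where "phi = (\<lambda>u. (u + c ^ q) / (c * u + 1))"
  have phid: "phi u = (u + d) / (c * u + 1)" for u by (simp add: phi_def d_def)
  have phiU: "phi u \<in> ?U" if u: "u \<in> ?U" for u
  proof -
    define v where "v = u ^ q"
    have uv: "u * v = 1" using Uu'[OF u] by (simp add: v_def)
    have v0: "v \<noteq> 0" using uv by auto
    have dv: "d * v + 1 = (d + u) * v" using uv by (simp add: algebra_simps)
    have dv0: "d * v + 1 \<noteq> 0" using dv v0 num[OF u] by (simp add: add.commute)
    have "phi u ^ q = (v + c) / (d * v + 1)"
      by (simp add: phid power_divide frob power_mult_distrib dq v_def d_def[symmetric])
    moreover have "((v + c) / (d * v + 1)) * ((u + d) / (c * u + 1)) = 1"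
    proof -
      have "(v + c) * (u + d) = (d * v + 1) * (c * u + 1)" using uv by algebra
      moreover have "(d * v + 1) * (c * u + 1) \<noteq> 0" using dv0 den[OF u] by simp
      ultimately show ?thesis by (simp only: times_divide_times_eq) simp
    qed
    ultimately have "phi u ^ q * phi u = 1" by (simp add: phid)
    then have "phi u ^ (q + 1) = 1" by (simp add: mult.commute)
    then show ?thesis by (simp add: unit_roots_def)
  qed
  have phiphi: "phi (phi u) = u" if u: "u \<in> ?U" for u
  proof -
    define w where "w = c * u + 1"
    define A where "A = u + d"
    have w0: "w \<noteq> 0" using den[OF u] by (simp add: w_def)
    have "A + d * w = u * (1 + c * d) + (d + d)" unfolding A_def w_def by algebra
    then have e1: "A + d * w = u * (1 + c * d)" using xx by simp
    have "c * A + w = 1 + c * d + (c * u + c * u)" unfolding A_def w_def by algebra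
    then have e2: "c * A + w = 1 + c * d" using xx by simp
    have "phi (phi u) = (A / w + d) / (c * (A / w) + 1)" by (simp add: phid A_def w_def)
    also have "\<dots> = ((A + d * w) / w) / ((c * A + w) / w)"
    proof -
      have n1: "A / w + d = (A + d * w) / w" using w0 by (simp add: field_simps)
      have n2: "c * (A / w) + 1 = (c * A + w) / w" using w0 by (simp add: field_simps)
      show ?thesis by (simp only: n1 n2)
    qed
    also have "\<dots> = (A + d * w) / (c * A + w)" using w0 by simp
    also have "\<dots> = u" using e1 e2 cd1' by simp
    finally show ?thesis .
  qed
  have bij: "bij_betw phi ?U ?U"
    by (rule bij_betw_byWitness[where f'=phi]) (use phiU phiphi in auto)
  have dg: "degree p \<le> q" and pf: "\<And>u. u \<in> ?U \<Longrightarrow> poly p u = phi u ^ e"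
    using assms(8) by (auto simp: is_poly_expansion_def phi_def)
  note PS = power_sum_U[OF card q2 ch ev]
  have a0: "coeff p 0 = 0"
  proof -
    have "coeff p 0 = (\<Sum>u\<in>?U. poly p u * u ^ (q + 1 - 0))"
      by (rule coeff_extract[OF card q2 ch ev dg, symmetric]) simp
    also have "\<dots> = (\<Sum>u\<in>?U. phi u ^ e)"
    proof (rule sum.cong[OF refl])
      fix u assume u: "u \<in> ?U"
      have "u ^ (q + 1 - 0) = 1" using Uu[OF u] by (simp only: diff_zero)
      then show "poly p u * u ^ (q + 1 - 0) = phi u ^ e" using pf[OF u] by simp
    qed
    also have "\<dots> = (\<Sum>v\<in>?U. v ^ e)"
      by (rule sum.reindex_bij_betw[OF bij])
    also have "\<dots> = 0"
    proof -
      have "\<not> (q + 1) dvd e" using assms(6,7) by (auto dest: dvd_imp_le)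
      then show ?thesis by (subst PS) (simp only: if_False)
    qed
    finally show ?thesis .
  qed
  define G where "G = (\<lambda>v. \<Sum>k\<le>q. v ^ (q - k) * d ^ k)"
  define D where "D = 1 + c * d"
  have geo: "(v + d) * G v = D" if v: "v \<in> ?U" for v
  proof -
    have "d ^ (q + 1) - v ^ (q + 1) = (d - v) * (\<Sum>i<q + 1. v ^ (q + 1 - Suc i) * d ^ i)"
      by (rule power_diff_sumr2)
    then have "d ^ (q + 1) + 1 = (d + v) * (\<Sum>i\<le>q. v ^ (q - i) * d ^ i)"
      using Uu[OF v] by (simp add: mp lessThan_Suc_atMost)
    then have "c * d + 1 = (d + v) * (\<Sum>i\<le>q. v ^ (q - i) * d ^ i)" by (simp only: dd)
    then show ?thesis by (simp add: G_def D_def add.commute)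
  qed
  have phiq: "v ^ e * phi v ^ q = (\<Sum>k\<le>q. d ^ k * (c * v ^ (e + 1 + (q - k)) + v ^ (e + (q - k)))) / D"
    if v: "v \<in> ?U" for v
  proof -
    have "phi v ^ q * phi v = 1" using Uu[OF phiU[OF v]] by (simp add: mult.commute)
    then have "phi v ^ q = (c * v + 1) / (v + d)" using num[OF v] den[OF v]
      by (simp add: phid field_simps)
    also have "\<dots> = (c * v + 1) * G v / D" using geo[OF v] num[OF v] cd1'
      by (simp add: D_def field_simps)
    finally have "v ^ e * phi v ^ q = (v ^ e * (c * v + 1) * G v) / D" by simp
    also have "v ^ e * (c * v + 1) * G v = (\<Sum>k\<le>q. d ^ k * (c * v ^ (e + 1 + (q - k)) + v ^ (e + (q - k))))"
    proof -
      have "v ^ e * (c * v + 1) * G v = (\<Sum>k\<le>q. v ^ e * (c * v + 1) * (v ^ (q - k) * d ^ k))"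
        by (simp only: G_def sum_distrib_left)
      also have "\<dots> = (\<Sum>k\<le>q. d ^ k * (c * v ^ (e + 1 + (q - k)) + v ^ (e + (q - k))))"
      proof (rule sum.cong[OF refl])
        fix k
        have h1: "v ^ (e + 1 + (q - k)) = v ^ e * v * v ^ (q - k)" by (simp only: power_add power_one_right)
        have h2: "v ^ (e + (q - k)) = v ^ e * v ^ (q - k)" by (simp only: power_add)
        show "v ^ e * (c * v + 1) * (v ^ (q - k) * d ^ k) = d ^ k * (c * v ^ (e + 1 + (q - k)) + v ^ (e + (q - k)))"
          by (simp only: h1 h2) (simp add: algebra_simps)
      qed
      finally show ?thesis .
    qed
    finally show ?thesis .
  qed
  have a1: "coeff p 1 = c ^ (q * (e - 1))"
  proof -
    have "coeff p 1 = (\<Sum>u\<in>?U. poly p u * u ^ (q + 1 - 1))"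
      by (rule coeff_extract[OF card q2 ch ev dg, symmetric]) (use q2 in simp)
    also have "\<dots> = (\<Sum>u\<in>?U. phi u ^ e * u ^ q)"
      by (rule sum.cong) (simp_all add: pf)
    also have "\<dots> = (\<Sum>v\<in>?U. phi (phi v) ^ e * phi v ^ q)"
      by (rule sum.reindex_bij_betw[OF bij, symmetric])
    also have "\<dots> = (\<Sum>v\<in>?U. (\<Sum>k\<le>q. d ^ k * (c * v ^ (e + 1 + (q - k)) + v ^ (e + (q - k)))) / D)"
      by (rule sum.cong) (simp_all add: phiphi phiq)
    also have "\<dots> = (\<Sum>k\<le>q. d ^ k * (c * (\<Sum>v\<in>?U. v ^ (e + 1 + (q - k))) + (\<Sum>v\<in>?U. v ^ (e + (q - k))))) / D"
    proof -
      have "(\<Sum>v\<in>?U. (\<Sum>k\<le>q. d ^ k * (c * v ^ (e + 1 + (q - k)) + v ^ (e + (q - k)))) / D)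
          = (\<Sum>v\<in>?U. \<Sum>k\<le>q. d ^ k * (c * v ^ (e + 1 + (q - k)) + v ^ (e + (q - k)))) / D"
        by (rule sum_divide_distrib[symmetric])
      also have "(\<Sum>v\<in>?U. \<Sum>k\<le>q. d ^ k * (c * v ^ (e + 1 + (q - k)) + v ^ (e + (q - k))))
          = (\<Sum>k\<le>q. \<Sum>v\<in>?U. d ^ k * (c * v ^ (e + 1 + (q - k)) + v ^ (e + (q - k))))"
        by (rule sum.swap)
      also have "\<dots> = (\<Sum>k\<le>q. d ^ k * (c * (\<Sum>v\<in>?U. v ^ (e + 1 + (q - k))) + (\<Sum>v\<in>?U. v ^ (e + (q - k)))))"
        by (rule sum.cong[OF refl]) (simp only: sum.distrib[symmetric] sum_distrib_left distrib_left)
      finally show ?thesis .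
    qed
    also have "\<dots> = (\<Sum>k\<le>q. d ^ k * (c * (if k = e then 1 else 0) + (if k = e - 1 then 1 else 0))) / D"
    proof -
      have "(\<Sum>v\<in>?U. v ^ (e + 1 + (q - k))) = (if k = e then 1 else 0)
            \<and> (\<Sum>v\<in>?U. v ^ (e + (q - k))) = (if k = e - 1 then 1 else 0)" if k: "k \<le> q" for k
      proof
        have "(q + 1) dvd (e + 1 + (q - k)) \<longleftrightarrow> k = e"
        proof
          assume "(q + 1) dvd (e + 1 + (q - k))"
          moreover have "0 < e + 1 + (q - k)" "e + 1 + (q - k) < 2 * (q + 1)" using k assms(7) by auto
          ultimately have "e + 1 + (q - k) = q + 1" by (rule dvd_window)
          then show "k = e" using k by simp
        qed (use assms(7) in simp)
        then show "(\<Sum>v\<in>?U. v ^ (e + 1 + (q - k))) = (if k = e then 1 else 0)" by (simp only: PS)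
      next
        have "(q + 1) dvd (e + (q - k)) \<longleftrightarrow> k = e - 1"
        proof
          assume "(q + 1) dvd (e + (q - k))"
          moreover have "0 < e + (q - k)" "e + (q - k) < 2 * (q + 1)" using k assms(6,7) by auto
          ultimately have "e + (q - k) = q + 1" by (rule dvd_window)
          then show "k = e - 1" using k by simp
        qed (use assms(6,7) in simp)
        then show "(\<Sum>v\<in>?U. v ^ (e + (q - k))) = (if k = e - 1 then 1 else 0)" by (simp only: PS)
      qed
      then show ?thesis by (intro arg_cong[where f="\<lambda>x. x / D"] sum.cong) simp_all
    qed
    also have "\<dots> = (c * d ^ e + d ^ (e - 1)) / D"
    proof -
      have "(\<Sum>k\<le>q. d ^ k * (c * (if k = e then 1 else 0) + (if k = e - 1 then 1 else 0)))
          = (\<Sum>k\<le>q. (if k = e then c * d ^ k else 0) + (if k = e - 1 then d ^ k else 0))"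
        by (rule sum.cong[OF refl]) (simp add: algebra_simps)
      also have "\<dots> = (\<Sum>k\<le>q. (if k = e then c * d ^ k else 0)) + (\<Sum>k\<le>q. (if k = e - 1 then d ^ k else 0))"
        by (rule sum.distrib)
      also have "\<dots> = c * d ^ e + d ^ (e - 1)"
        using assms(6,7) by (simp only: sum.delta finite_atMost atMost_iff) simp
      finally show ?thesis by simp
    qed
    also have "\<dots> = d ^ (e - 1)"
    proof -
      have "d ^ e = d ^ (e - 1) * d" using assms(6) by (metis Suc_diff_le diff_Suc_1 power_Suc2)
      then have "c * d ^ e + d ^ (e - 1) = d ^ (e - 1) * D" by (simp add: D_def algebra_simps)
      then show ?thesis using cd1' by (simp add: D_def)
    qed
    also have "\<dots> = c ^ (q * (e - 1))" by (simp add: d_def power_mult)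
    finally show ?thesis .
  qed
  show ?thesis using a0 a1 by simp
qed

end
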